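(* For each $n\ge0$ there is an exact sequence of $k$-modules \[0\leftarrow k\xleftarrow{\varepsilon}k\bigl[\mathrm{Hom}_{\mathcal{IF}(as)}([n],[0])\bigr]\xleftarrow{\rho}k\bigl[\mathrm{Hom}_{\mathcal{IF}(as)}([n],[2])\bigr],\] where $\varepsilon(f)=1_k$ on generators and $\rho(g)=\mu_2\circ g-\nu\circ g$ on generators, both extended $k$-linearly.
   Context: Let $k$ be a commutative ring and $C_2=\{1,t\}$. The category $\mathcal{IF}(as)$ of involutive non-commutative sets: objects $[n]=\{0,\dots,n\}$, $n\ge0$; a morphism $f:[n]\to[m]$ is a map of sets together with a total order on each fibre $f^{-1}(i)$ and a $C_2$-label on each element of $[n]$ (so each fibre is a $C_2$-labelled ordered set). For a $C_2$-labelled ordered set $S$, $S^t$ denotes $S$ with the order reversed and all labels multiplied by $t$. The composite $g\circ f$ of $f:[n]\to[m]$ and $g:[m]\to[l]$ has the composite underlying map and, for $i\in[l]$ with $g^{-1}(i)=\{j_1<\dots<j_r\}$, fibre the concatenation $S_1<\dots<S_r$ where $S_s=f^{-1}(j_s)$ if $j_s$ has label $1$ and $S_s=f^{-1}(j_s)^t$ if $j_s$ has label $t$. For $n\ge0$, $\mu_n:[n]\to[0]$ is given by $\mu_n^{-1}(0)=\{0^1<1^1<\dots<n^1\}$ (superscripts are labels), and $\nu:[2]\to[0]$ is given by $\nu^{-1}(0)=\{2^1<1^t<0^1\}$. $k[S]$ denotes the free $k$-module on a set $S$. *)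

theory Defs
  imports Main
begin

datatype c2 = C1 | Ct

fun c2_mult :: "c2 \<Rightarrow> c2 \<Rightarrow> c2" where
  "c2_mult C1 b = b"
| "c2_mult Ct C1 = Ct"
| "c2_mult Ct Ct = C1"

text \<open>A C_2-labelled ordered set is a list of pairs (element, label), listed in
increasing order.  A morphism f : [n] -> [m] is encoded by the list of its m+1
fibres f^{-1}(0), ..., f^{-1}(m), each a C_2-labelled ordered set; these
fibres together contain each element of [n] = {0,...,n} exactly once.\<close>

type_synonym lset = "(nat \<times> c2) list"
type_synonym ifmor = "lset list"

definition IF_hom :: "nat \<Rightarrow> nat \<Rightarrow> ifmor set" where
  "IF_hom n m = {F. length F = Suc m \<and> distinct (map fst (concat F))
                    \<and> set (map fst (concat F)) = {0..n}}"

definition twist :: "lset \<Rightarrow> lset" where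
  "twist S = rev (map (\<lambda>(x, l). (x, c2_mult Ct l)) S)"

text \<open>Composite g o f, for f : [n] -> [m] and g : [m] -> [l]: the fibre over i is
the concatenation, along the fibre g^{-1}(i) = {j_1 < ... < j_r}, of f^{-1}(j_s)
(label of j_s equal to 1) or f^{-1}(j_s)^t (label of j_s equal to t).\<close>
definition IF_comp :: "ifmor \<Rightarrow> ifmor \<Rightarrow> ifmor" where
  "IF_comp g f = map (\<lambda>S. concat (map (\<lambda>(j, l). if l = C1 then f ! j else twist (f ! j)) S)) g"

definition mu :: "nat \<Rightarrow> ifmor" where
  "mu n = [map (\<lambda>i. (i, C1)) [0..<Suc n]]"

definition nu :: ifmor where
  "nu = [[(2, C1), (1, Ct), (0, C1)]]"

text \<open>k[S]: functions S -> k vanishing outside S (the Hom-sets are finite).\<close>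
definition free_mod :: "'a set \<Rightarrow> ('a \<Rightarrow> 'k::comm_ring_1) set" where
  "free_mod S = {x. finite {a. x a \<noteq> 0} \<and> (\<forall>a. a \<notin> S \<longrightarrow> x a = 0)}"

definition gen :: "'a \<Rightarrow> 'a \<Rightarrow> 'k::comm_ring_1" where
  "gen a = (\<lambda>b. if b = a then 1 else 0)"

definition eps_map :: "nat \<Rightarrow> (ifmor \<Rightarrow> 'k::comm_ring_1) \<Rightarrow> 'k" where
  "eps_map n x = (\<Sum>f\<in>IF_hom n 0. x f * 1)"

definition rho_map :: "nat \<Rightarrow> (ifmor \<Rightarrow> 'k::comm_ring_1) \<Rightarrow> (ifmor \<Rightarrow> 'k)" where
  "rho_map n y = (\<lambda>h. \<Sum>g\<in>IF_hom n 2. y g * (gen (IF_comp (mu 2) g) h - gen (IF_comp nu g) h))"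

end

theory Submission
  imports Defs "HOL-Library.Multiset"
begin

definition W :: "nat \<Rightarrow> lset set" where
  "W n = {w. distinct (map fst w) \<and> set (map fst w) = {0..n}}"

lemma W_mset: "w \<in> W n \<Longrightarrow> mset (map fst w') = mset (map fst w) \<Longrightarrow> w' \<in> W n"
  unfolding W_def by (metis mem_Collect_eq mset_eq_imp_distinct_iff mset_eq_setD)

lemma c2_tt[simp]: "c2_mult Ct (c2_mult Ct l) = l"
  by (cases l) auto

lemma twist_fst[simp]: "map fst (twist X) = rev (map fst X)"
  unfolding twist_def by (induction X) auto

lemma twist_twist[simp]: "twist (twist X) = X"
  unfolding twist_def by (induction X) (auto simp: rev_map)

lemma twist_Nil[simp]: "twist [] = []" by (simp add: twist_def)

locale conn =
  fixes n :: nat and R :: "lset \<Rightarrow> lset \<Rightarrow> bool"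
  assumes Rsym: "R a b \<Longrightarrow> R b a"
    and Rtrans: "R a b \<Longrightarrow> R b c \<Longrightarrow> R a c"
    and Rrefl: "R a a"
    and move: "A @ B @ C \<in> W n \<Longrightarrow> R (A @ B @ C) (C @ twist B @ A)"
begin

lemma rot: "A @ C \<in> W n \<Longrightarrow> R (A @ C) (C @ A)"
  using move[of A "[]" C] by simp

lemma twist_prefix: "B @ C \<in> W n \<Longrightarrow> R (B @ C) (twist B @ C)"
proof -
  assume a: "B @ C \<in> W n"
  have 1: "R (B @ C) (C @ twist B)" using move[of "[]" B C] a by simp
  have "C @ twist B \<in> W n" using a by (rule W_mset) auto
  then have 2: "R (C @ twist B) (twist B @ C)" by (rule rot)
  show ?thesis using Rtrans[OF 1 2] .
qed

lemma local_twist: "u @ X @ v \<in> W n \<Longrightarrow> R (u @ X @ v) (u @ twist X @ v)"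
proof -
  assume a: "u @ X @ v \<in> W n"
  have 1: "R (u @ (X @ v)) ((X @ v) @ u)" using rot[of u "X @ v"] a by simp
  have b: "X @ (v @ u) \<in> W n" using a by (rule W_mset) auto
  have 2: "R (X @ (v @ u)) (twist X @ (v @ u))" using twist_prefix[OF b] .
  have c: "(twist X @ v) @ u \<in> W n" using a by (rule W_mset) auto
  have 3: "R ((twist X @ v) @ u) (u @ (twist X @ v))" using rot[OF c] .
  show ?thesis using Rtrans[OF Rtrans[OF 1] 3] 2 by simp
qed

definition E :: "lset \<Rightarrow> lset \<Rightarrow> bool" where
  "E xs ys \<longleftrightarrow> mset (map fst xs) = mset (map fst ys) \<and>
     (\<forall>u v. u @ xs @ v \<in> W n \<longrightarrow> R (u @ xs @ v) (u @ ys @ v))"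

lemma E_refl: "E xs xs" unfolding E_def using Rrefl by simp

lemma E_trans: "E xs ys \<Longrightarrow> E ys zs \<Longrightarrow> E xs zs"
  unfolding E_def
proof (intro conjI allI impI, goal_cases)
  case 1 then show ?case by simp
next
  case (2 u v)
  have "u @ ys @ v \<in> W n" using 2(3) by (rule W_mset) (use 2 in simp)
  then show ?case using 2 Rtrans by blast
qed

lemma E_cong: "E xs ys \<Longrightarrow> E (p @ xs @ q) (p @ ys @ q)"
  unfolding E_def
proof (intro conjI allI impI, goal_cases)
  case 1 then show ?case by simp
next
  case (2 u v)
  then have "R ((u @ p) @ xs @ (q @ v)) ((u @ p) @ ys @ (q @ v))"
    using 2(1)[THEN conjunct2, rule_format, of "u @ p" "q @ v"] by simp
  then show ?case by simp
qed

lemma E_twist: "E X (twist X)"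
  unfolding E_def using local_twist by simp

lemma E_flip: "E [(x, l)] [(x, l')]"
proof (cases "l = l'")
  case True then show ?thesis using E_refl by simp
next
  case False
  then have "l' = c2_mult Ct l" by (cases l; cases l') auto
  then show ?thesis using E_twist[of "[(x, l)]"] by (simp add: twist_def)
qed

lemma E_swap: "E [a, b] [b, a]"
proof -
  obtain x l y m where ab: "a = (x, l)" "b = (y, m)" by fastforce
  have 1: "E [a, b] [(y, c2_mult Ct m), (x, c2_mult Ct l)]"
    using E_twist[of "[a, b]"] by (simp add: twist_def ab)
  have 2: "E [(y, c2_mult Ct m), (x, c2_mult Ct l)] [(y, m), (x, c2_mult Ct l)]"
    using E_cong[OF E_flip[of y "c2_mult Ct m" m], of "[]" "[(x, c2_mult Ct l)]"] by simp
  have 3: "E [(y, m), (x, c2_mult Ct l)] [(y, m), (x, l)]"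
    using E_cong[OF E_flip[of x "c2_mult Ct l" l], of "[(y, m)]" "[]"] by simp
  show ?thesis using E_trans[OF E_trans[OF 1 2] 3] ab by simp
qed

lemma E_insert: "E ((a, l) # map (\<lambda>i. (i, C1)) zs) (map (\<lambda>i. (i, C1)) (insort a zs))"
proof (induction zs)
  case Nil
  then show ?case using E_flip by simp
next
  case (Cons z zs)
  show ?case
  proof (cases "a \<le> z")
    case True
    then show ?thesis
      using E_cong[OF E_flip[of a l C1], of "[]" "map (\<lambda>i. (i, C1)) (z # zs)"] by simp
  next
    case False
    have 1: "E ((a, l) # map (\<lambda>i. (i, C1)) (z # zs)) ((z, C1) # (a, l) # map (\<lambda>i. (i, C1)) zs)"
      using E_cong[OF E_swap, of "[]" "(a, l)" "(z, C1)" "map (\<lambda>i. (i, C1)) zs"] by simp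
    have 2: "E ((z, C1) # (a, l) # map (\<lambda>i. (i, C1)) zs) ((z, C1) # map (\<lambda>i. (i, C1)) (insort a zs))"
      using E_cong[OF Cons.IH, of "[(z, C1)]" "[]"] by simp
    show ?thesis using E_trans[OF 1 2] False by simp
  qed
qed

lemma E_sort: "E xs (map (\<lambda>i. (i, C1)) (sort (map fst xs)))"
proof (induction xs)
  case Nil
  then show ?case using E_refl by simp
next
  case (Cons p xs)
  obtain a l where p: "p = (a, l)" by fastforce
  have 1: "E ((a, l) # xs) ((a, l) # map (\<lambda>i. (i, C1)) (sort (map fst xs)))"
    using E_cong[OF Cons.IH, of "[(a, l)]" "[]"] by simp
  show ?case using E_trans[OF 1 E_insert] p by simp
qed

definition canon :: lset where "canon = map (\<lambda>i. (i, C1)) [0..<Suc n]"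

lemma connected: "w \<in> W n \<Longrightarrow> R w canon"
proof -
  assume w: "w \<in> W n"
  have "mset [0..<Suc n] = mset (map fst w)"
    using w unfolding W_def
    by (subst set_eq_iff_mset_eq_distinct[symmetric]) (auto simp: atLeastLessThanSuc_atLeastAtMost)
  then have s: "sort (map fst w) = [0..<Suc n]"
    by (metis properties_for_sort sorted_upt)
  have "E w canon" using E_sort[of w] unfolding canon_def s .
  then show ?thesis using w unfolding E_def by (metis append_Nil append_Nil2)
qed

end


lemma c2_UNIV: "(UNIV :: c2 set) = {C1, Ct}"
  using c2.exhaust by auto

lemma finite_c2[simp]: "finite (UNIV :: c2 set)"
  by (simp add: c2_UNIV)

lemma IF_hom_finite: "finite (IF_hom n m)"
proof -
  let ?L = "{xs :: lset. set xs \<subseteq> {0..n} \<times> UNIV \<and> length xs \<le> Suc n}"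
  have fL: "finite ?L" by (rule finite_lists_length_le) auto
  have sub: "IF_hom n m \<subseteq> {F. set F \<subseteq> ?L \<and> length F \<le> Suc m}"
  proof
    fix F assume F: "F \<in> IF_hom n m"
    have d: "distinct (map fst (concat F))" and s: "set (map fst (concat F)) = {0..n}"
      using F unfolding IF_hom_def by blast+
    have len: "length (concat F) = Suc n"
      using distinct_card[OF d] unfolding s by simp
    have "S \<in> ?L" if S: "S \<in> set F" for S
    proof -
      obtain as bs where "F = as @ S # bs" using split_list[OF S] by blast
      then have "length S \<le> length (concat F)" by simp
      moreover have "set S \<subseteq> set (concat F)" using S by auto
      moreover have "fst ` set (concat F) = {0..n}" using s by simp
      ultimately have "length S \<le> Suc n" "fst ` set S \<subseteq> {0..n}" using len by auto
      then show ?thesis by auto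
    qed
    then show "F \<in> {F. set F \<subseteq> ?L \<and> length F \<le> Suc m}"
      using F unfolding IF_hom_def by auto
  qed
  show ?thesis
    by (rule finite_subset[OF sub]) (rule finite_lists_length_le[OF fL])
qed

lemma hom0_iff: "[w] \<in> IF_hom n 0 \<longleftrightarrow> w \<in> W n"
  unfolding IF_hom_def W_def by simp

lemma hom0_elem: "h \<in> IF_hom n 0 \<Longrightarrow> \<exists>w. h = [w] \<and> w \<in> W n"
  unfolding IF_hom_def W_def by (cases h) auto

lemma hom2_elem: "g \<in> IF_hom n 2 \<Longrightarrow> \<exists>A B C. g = [A, B, C] \<and> A @ B @ C \<in> W n"
  unfolding IF_hom_def W_def numeral_2_eq_2
  by (auto simp: length_Suc_conv)

lemma hom2_iff: "[A, B, C] \<in> IF_hom n 2 \<longleftrightarrow> A @ B @ C \<in> W n"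
  unfolding IF_hom_def W_def by simp

lemma comp_mu: "IF_comp (mu 2) [A, B, C] = [A @ B @ C]"
  by (simp add: IF_comp_def mu_def eval_nat_numeral)

lemma comp_nu: "IF_comp nu [A, B, C] = [C @ twist B @ A]"
  by (simp add: IF_comp_def nu_def)

lemma comps_in:
  assumes "g \<in> IF_hom n 2"
  shows "IF_comp (mu 2) g \<in> IF_hom n 0" "IF_comp nu g \<in> IF_hom n 0"
proof -
  obtain A B C where g: "g = [A, B, C]" "A @ B @ C \<in> W n" using hom2_elem[OF assms] by blast
  have "C @ twist B @ A \<in> W n" using g(2) by (rule W_mset) auto
  then show "IF_comp (mu 2) g \<in> IF_hom n 0" "IF_comp nu g \<in> IF_hom n 0"
    using g by (simp_all add: comp_mu comp_nu hom0_iff)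
qed

definition Im :: "nat \<Rightarrow> (ifmor \<Rightarrow> 'k::comm_ring_1) set" where
  "Im n = rho_map n ` free_mod (IF_hom n 2)"

lemma free_mod_add:
  assumes "a \<in> free_mod S" "b \<in> free_mod S" shows "(\<lambda>x. a x + b x) \<in> free_mod S"
proof -
  have sub: "{x. a x + b x \<noteq> 0} \<subseteq> {x. a x \<noteq> 0} \<union> {x. b x \<noteq> 0}" by auto
  have "finite ({x. a x \<noteq> 0} \<union> {x. b x \<noteq> 0})" using assms unfolding free_mod_def by simp
  then have "finite {x. a x + b x \<noteq> 0}" using finite_subset[OF sub] by blast
  then show ?thesis using assms unfolding free_mod_def by simp
qed

lemma free_mod_smult:
  assumes "a \<in> free_mod S" shows "(\<lambda>x. c * a x) \<in> free_mod S"
proof -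
  have sub: "{x. c * a x \<noteq> 0} \<subseteq> {x. a x \<noteq> 0}" by auto
  have "finite {x. a x \<noteq> 0}" using assms unfolding free_mod_def by simp
  then have "finite {x. c * a x \<noteq> 0}" using finite_subset[OF sub] by blast
  then show ?thesis using assms unfolding free_mod_def by simp
qed

lemma free_mod_zero: "(\<lambda>x. 0) \<in> free_mod S"
  unfolding free_mod_def by auto

lemma rho_add: "rho_map n (\<lambda>x. a x + b x) = (\<lambda>h. rho_map n a h + rho_map n b h)"
  unfolding rho_map_def
  by (rule ext, subst sum.distrib[symmetric], rule sum.cong, simp_all add: distrib_right)

lemma rho_smult: "rho_map n (\<lambda>x. c * a x) = (\<lambda>h. c * rho_map n a h)"
  unfolding rho_map_def
  by (rule ext, subst sum_distrib_left, rule sum.cong, simp_all add: mult.assoc)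

lemma Im_zero: "(\<lambda>h. 0) \<in> Im n"
  unfolding Im_def by (rule image_eqI[OF _ free_mod_zero]) (simp add: rho_map_def)

lemma Im_add:
  assumes "a \<in> Im n" "b \<in> Im n" shows "(\<lambda>h. a h + b h) \<in> Im n"
proof -
  obtain ya yb where y: "ya \<in> free_mod (IF_hom n 2)" "a = rho_map n ya"
    "yb \<in> free_mod (IF_hom n 2)" "b = rho_map n yb" using assms unfolding Im_def by blast
  have "(\<lambda>h. a h + b h) = rho_map n (\<lambda>x. ya x + yb x)" using y by (simp add: rho_add)
  then show ?thesis unfolding Im_def using free_mod_add[OF y(1) y(3)] by blast
qed

lemma Im_smult:
  assumes "a \<in> Im n" shows "(\<lambda>h. c * a h) \<in> Im n"
proof -
  obtain ya where y: "ya \<in> free_mod (IF_hom n 2)" "a = rho_map n ya"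
    using assms unfolding Im_def by blast
  have "(\<lambda>h. c * a h) = rho_map n (\<lambda>x. c * ya x)" using y by (simp add: rho_smult)
  then show ?thesis unfolding Im_def using free_mod_smult[OF y(1)] by blast
qed

lemma Im_sum: "finite S \<Longrightarrow> (\<And>s. s \<in> S \<Longrightarrow> f s \<in> Im n) \<Longrightarrow> (\<lambda>h. \<Sum>s\<in>S. f s h) \<in> Im n"
proof (induction S rule: finite_induct)
  case empty then show ?case using Im_zero by simp
next
  case (insert x F)
  then show ?case using Im_add[of "f x" n "\<lambda>h. \<Sum>s\<in>F. f s h"] by simp
qed

lemma gen_free: "g \<in> S \<Longrightarrow> gen g \<in> free_mod S"
  unfolding free_mod_def gen_def by auto

lemma sum_gen: "finite S \<Longrightarrow> g \<in> S \<Longrightarrow> (\<Sum>x\<in>S. gen g x * f x) = (f g :: 'k::comm_ring_1)"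
proof -
  assume a: "finite S" "g \<in> S"
  have "(\<Sum>x\<in>S. gen g x * f x) = (\<Sum>x\<in>S. if x = g then f x else 0)"
    by (rule sum.cong) (auto simp: gen_def)
  then show ?thesis using a by simp
qed

lemma Im_gen:
  assumes "g \<in> IF_hom n 2"
  shows "(gen (IF_comp (mu 2) g) - gen (IF_comp nu g) :: ifmor \<Rightarrow> 'k::comm_ring_1) \<in> Im n"
proof -
  have "rho_map n (gen g) = (gen (IF_comp (mu 2) g) - gen (IF_comp nu g) :: ifmor \<Rightarrow> 'k)"
    unfolding rho_map_def
    by (rule ext) (simp add: sum_gen IF_hom_finite assms)
  then show ?thesis unfolding Im_def by (rule image_eqI[OF sym gen_free[OF assms]])
qed

lemma Im_move:
  assumes "A @ B @ C \<in> W n"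
  shows "(gen [A @ B @ C] - gen [C @ twist B @ A] :: ifmor \<Rightarrow> 'k::comm_ring_1) \<in> Im n"
  using Im_gen[of "[A, B, C]" n] assms by (simp add: hom2_iff comp_mu comp_nu)

lemma conn_inst: "conn n (\<lambda>w w'. (gen [w] - gen [w'] :: ifmor \<Rightarrow> 'k::comm_ring_1) \<in> Im n)"
proof
  fix a b :: lset
  assume "(gen [a] - gen [b] :: ifmor \<Rightarrow> 'k) \<in> Im n"
  from Im_smult[OF this, of "-1"] show "(gen [b] - gen [a] :: ifmor \<Rightarrow> 'k) \<in> Im n"
    by (simp add: fun_diff_def)
next
  fix a b c :: lset
  assume "(gen [a] - gen [b] :: ifmor \<Rightarrow> 'k) \<in> Im n" "(gen [b] - gen [c] :: ifmor \<Rightarrow> 'k) \<in> Im n"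
  from Im_add[OF this] show "(gen [a] - gen [c] :: ifmor \<Rightarrow> 'k) \<in> Im n"
    by (simp add: fun_diff_def)
next
  fix a :: lset
  show "(gen [a] - gen [a] :: ifmor \<Rightarrow> 'k) \<in> Im n" using Im_zero by (simp add: fun_diff_def)
next
  fix A B C
  assume "A @ B @ C \<in> W n"
  then show "(gen [A @ B @ C] - gen [C @ twist B @ A] :: ifmor \<Rightarrow> 'k) \<in> Im n" by (rule Im_move)
qed


lemma sum_gen1: "finite S \<Longrightarrow> a \<in> S \<Longrightarrow> (\<Sum>x\<in>S. gen a x) = (1 :: 'k::comm_ring_1)"
  unfolding gen_def by simp

lemma mu_in: "mu n \<in> IF_hom n 0"
proof -
  have m: "map fst (map (\<lambda>i. (i, C1)) xs) = xs" for xs :: "nat list" by (induction xs) auto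
  show ?thesis unfolding mu_def IF_hom_def
    by (simp del: upt_Suc add: comp_def image_image atLeastLessThanSuc_atLeastAtMost)
qed

lemma eps_surj: "eps_map n ` (free_mod (IF_hom n 0) :: (ifmor \<Rightarrow> 'k::comm_ring_1) set) = UNIV"
proof -
  have "c \<in> eps_map n ` (free_mod (IF_hom n 0) :: (ifmor \<Rightarrow> 'k) set)" for c :: 'k
  proof (rule image_eqI[OF _ free_mod_smult[OF gen_free[OF mu_in]]])
    have "eps_map n (\<lambda>f. c * gen (mu n) f) = c * (\<Sum>f\<in>IF_hom n 0. gen (mu n) f)"
      unfolding eps_map_def by (simp add: sum_distrib_left)
    also have "\<dots> = c" using sum_gen1[where 'k='k, OF IF_hom_finite[of n 0] mu_in[of n]] by simp
    finally show "c = eps_map n (\<lambda>f. c * gen (mu n) f)" by simp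
  qed
  then show ?thesis by blast
qed


lemma Im_sub_ker:
  assumes y: "y \<in> (free_mod (IF_hom n 2) :: (ifmor \<Rightarrow> 'k::comm_ring_1) set)"
  shows "rho_map n y \<in> free_mod (IF_hom n 0) \<and> eps_map n (rho_map n y) = 0"
proof
  have z: "rho_map n y h = 0" if h: "h \<notin> IF_hom n 0" for h
  proof -
    have "y g * (gen (IF_comp (mu 2) g) h - gen (IF_comp nu g) h) = 0" if g: "g \<in> IF_hom n 2" for g
    proof -
      have "IF_comp (mu 2) g \<noteq> h" "IF_comp nu g \<noteq> h" using comps_in[OF g] h by auto
      then show ?thesis by (simp add: gen_def)
    qed
    then show ?thesis unfolding rho_map_def by simp
  qed
  have "{h. rho_map n y h \<noteq> 0} \<subseteq> IF_hom n 0" using z by blast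
  then have "finite {h. rho_map n y h \<noteq> 0}" using finite_subset IF_hom_finite by blast
  then show "rho_map n y \<in> free_mod (IF_hom n 0)" unfolding free_mod_def using z by blast
next
  have "eps_map n (rho_map n y) = (\<Sum>h\<in>IF_hom n 0. \<Sum>g\<in>IF_hom n 2.
          y g * (gen (IF_comp (mu 2) g) h - gen (IF_comp nu g) h))"
    unfolding eps_map_def rho_map_def by simp
  also have "\<dots> = (\<Sum>g\<in>IF_hom n 2. \<Sum>h\<in>IF_hom n 0.
          y g * (gen (IF_comp (mu 2) g) h - gen (IF_comp nu g) h))"
    by (rule sum.swap)
  also have "\<dots> = (\<Sum>g\<in>IF_hom n 2. y g * ((\<Sum>h\<in>IF_hom n 0. gen (IF_comp (mu 2) g) h)
          - (\<Sum>h\<in>IF_hom n 0. gen (IF_comp nu g) h)))"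
    by (simp add: sum_distrib_left sum_subtractf right_diff_distrib)
  also have "\<dots> = 0"
    by (rule sum.neutral) (simp add: sum_gen1 IF_hom_finite comps_in)
  finally show "eps_map n (rho_map n y) = 0" .
qed

lemma ker_sub_Im:
  assumes x: "x \<in> (free_mod (IF_hom n 0) :: (ifmor \<Rightarrow> 'k::comm_ring_1) set)"
    and e: "eps_map n x = 0"
  shows "x \<in> Im n"
proof -
  interpret conn n "\<lambda>w w'. (gen [w] - gen [w'] :: ifmor \<Rightarrow> 'k) \<in> Im n"
    by (rule conn_inst)
  define c where "c = [canon]"
  have cW: "canon \<in> W n"
    unfolding canon_def W_def
    by (simp del: upt_Suc add: comp_def image_image atLeastLessThanSuc_atLeastAtMost)
  have each: "(\<lambda>b. x h * (gen h b - gen c b)) \<in> Im n" if h: "h \<in> IF_hom n 0" for h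
  proof -
    obtain w where w: "h = [w]" "w \<in> W n" using hom0_elem[OF h] by blast
    have "(gen [w] - gen [canon] :: ifmor \<Rightarrow> 'k) \<in> Im n" using connected[OF w(2)] .
    from Im_smult[OF this, of "x h"] show ?thesis using w by (simp add: c_def)
  qed
  have S: "(\<lambda>b. \<Sum>h\<in>IF_hom n 0. x h * (gen h b - gen c b)) \<in> Im n"
    by (rule Im_sum[OF IF_hom_finite]) (rule each)
  have eq: "(\<Sum>h\<in>IF_hom n 0. x h * (gen h b - gen c b)) = x b" for b
  proof -
    have 1: "(\<Sum>h\<in>IF_hom n 0. x h * gen h b) = x b"
    proof -
      have "(\<Sum>h\<in>IF_hom n 0. x h * gen h b) = (\<Sum>h\<in>IF_hom n 0. if b = h then x h else 0)"
        by (rule sum.cong) (auto simp: gen_def)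
      also have "\<dots> = x b" using x IF_hom_finite[of n 0] unfolding free_mod_def by auto
      finally show ?thesis .
    qed
    have 2: "(\<Sum>h\<in>IF_hom n 0. x h) = 0" using e unfolding eps_map_def by simp
    have "(\<Sum>h\<in>IF_hom n 0. x h * (gen h b - gen c b))
        = (\<Sum>h\<in>IF_hom n 0. x h * gen h b) - (\<Sum>h\<in>IF_hom n 0. x h) * gen c b"
      by (simp add: right_diff_distrib sum_subtractf sum_distrib_right)
    then show ?thesis using 1 2 by simp
  qed
  have "(\<lambda>b. \<Sum>h\<in>IF_hom n 0. x h * (gen h b - gen c b)) = x" using eq by (rule ext)
  then show ?thesis using S by simp
qed

theorem lemma5p3:
  fixes n :: nat
  shows "eps_map n ` (free_mod (IF_hom n 0) :: (ifmor \<Rightarrow> 'k::comm_ring_1) set) = UNIV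
       \<and> {x \<in> (free_mod (IF_hom n 0) :: (ifmor \<Rightarrow> 'k::comm_ring_1) set). eps_map n x = 0}
           = rho_map n ` (free_mod (IF_hom n 2) :: (ifmor \<Rightarrow> 'k) set)"
proof
  show "eps_map n ` (free_mod (IF_hom n 0) :: (ifmor \<Rightarrow> 'k::comm_ring_1) set) = UNIV"
    by (rule eps_surj)
  show "{x \<in> (free_mod (IF_hom n 0) :: (ifmor \<Rightarrow> 'k::comm_ring_1) set). eps_map n x = 0}
           = rho_map n ` (free_mod (IF_hom n 2) :: (ifmor \<Rightarrow> 'k) set)"
  proof
    show "{x \<in> (free_mod (IF_hom n 0) :: (ifmor \<Rightarrow> 'k::comm_ring_1) set). eps_map n x = 0}
           \<subseteq> rho_map n ` (free_mod (IF_hom n 2) :: (ifmor \<Rightarrow> 'k) set)"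
      using ker_sub_Im unfolding Im_def by blast
    show "rho_map n ` (free_mod (IF_hom n 2) :: (ifmor \<Rightarrow> 'k) set)
           \<subseteq> {x \<in> (free_mod (IF_hom n 0) :: (ifmor \<Rightarrow> 'k::comm_ring_1) set). eps_map n x = 0}"
      using Im_sub_ker by blast
  qed
qed

end
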